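(* Let $h=H(s::a::b)$ and $\Upsilon\subseteq\{z,z\boxplus h\}$. Then $$G(\vdash x\boxplus h)_\ell=G(x,z\vdash x\boxplus h)_\ell=2^{-\ell},\qquad G(a,b,s,x^{\circledast\kappa h}\vdash x\boxplus h)=1,\qquad G(a,b,s,x,\Upsilon\vdash x\boxplus h)=1.$$
   Context: Hancke–Kuhn setting with security parameter $\ell$: secret $s$, counters $a,b$, public hash $H$ modeled as a random oracle (outputs indistinguishable from uniformly random, independent on distinct inputs), token $h=H(s::a::b)=h^{(0)}::h^{(1)}\in\mathbb{Z}_2^{2\ell}$; $x\in\mathbb{Z}_2^\ell$ is Victor's uniformly random challenge and $z\in\mathbb{Z}_2^\ell$ an attacker's challenge chosen independently of $x$. $(x\boxplus h)_i=h^{(x_i)}_i$. Kernel $\kappa h=\{i\mid h^{(0)}_i=h^{(1)}_i\}$; $x^{\circledast I}$ replaces bits $x_i$, $i\in I$, by a wildcard. $G(\Xi\vdash\Theta)$ is the guessing chance: maximal probability over randomized guessing procedures of outputting $\Theta$ on input $\Xi$, over the random values, as a sequence in $\ell$ considered up to negligible difference; $G(\vdash\Theta)=G(\emptyset\vdash\Theta)$. *)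

theory Defs
  imports "HOL-Probability.Probability" "HOL-Library.FuncSet"
begin

text \<open>Bit strings of length n (elements of Z_2^n); True encodes the bit 1.\<close>
definition bits :: "nat \<Rightarrow> bool list set" where
  "bits n = {xs. length xs = n}"

text \<open>The random oracle H for security parameter l: a uniformly random function from
  inputs s::a::b (with s, a, b of length l, concatenated) to outputs in Z_2^(2l).\<close>
definition oracles :: "nat \<Rightarrow> (bool list \<Rightarrow> bool list) set" where
  "oracles l = bits (3 * l) \<rightarrow>\<^sub>E bits (2 * l)"

record world =
  orc :: "bool list \<Rightarrow> bool list"
  sec :: "bool list"
  cta :: "bool list"
  ctb :: "bool list"
  chx :: "bool list"                  (* Victor's challenge x *)
  chz :: "bool list"                  (* attacker's challenge z *)

text \<open>The attacker's challenge z
  is drawn from an arbitrary kernel Z l depending only on the public data H, a, b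
  (hence independently of x and of s).\<close>
definition world_pmf ::
  "(nat \<Rightarrow> (bool list \<Rightarrow> bool list) \<Rightarrow> bool list \<Rightarrow> bool list \<Rightarrow> bool list pmf) \<Rightarrow> nat \<Rightarrow> world pmf" where
  "world_pmf Z l =
     pmf_of_set (oracles l) \<bind> (\<lambda>H.
     pmf_of_set (bits l) \<bind> (\<lambda>s.
     pmf_of_set (bits l) \<bind> (\<lambda>a.
     pmf_of_set (bits l) \<bind> (\<lambda>b.
     pmf_of_set (bits l) \<bind> (\<lambda>x.
     Z l H a b \<bind> (\<lambda>z.
     return_pmf \<lparr>orc = H, sec = s, cta = a, ctb = b, chx = x, chz = z\<rparr>))))))"

definition token :: "world \<Rightarrow> bool list" where
  "token w = orc w (sec w @ cta w @ ctb w)"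

definition boxplus :: "nat \<Rightarrow> bool list \<Rightarrow> bool list \<Rightarrow> bool list" where
  "boxplus l x h = map (\<lambda>i. if x ! i then h ! (l + i) else h ! i) [0..<l]"

definition kernel :: "nat \<Rightarrow> bool list \<Rightarrow> nat set" where
  "kernel l h = {i. i < l \<and> h ! i = h ! (l + i)}"

definition wild :: "bool list \<Rightarrow> nat set \<Rightarrow> bool option list" where
  "wild x I = map (\<lambda>i. if i \<in> I then None else Some (x ! i)) [0..<length x]"

definition guess_prob :: "'w pmf \<Rightarrow> ('w \<Rightarrow> 'v) \<Rightarrow> ('w \<Rightarrow> 't) \<Rightarrow> ('v \<Rightarrow> 't pmf) \<Rightarrow> real" where
  "guess_prob D V T g = measure_pmf.expectation D (\<lambda>w. pmf (g (V w)) (T w))"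

definition guess_chance :: "'w pmf \<Rightarrow> ('w \<Rightarrow> 'v) \<Rightarrow> ('w \<Rightarrow> 't) \<Rightarrow> real" where
  "guess_chance D V T = (SUP g. guess_prob D V T g)"

definition negligible :: "(nat \<Rightarrow> real) \<Rightarrow> bool" where
  "negligible f \<longleftrightarrow> (\<forall>c::nat. \<forall>\<^sub>F l in sequentially. \<bar>f l\<bar> \<le> inverse (real l ^ c))"

definition negl_eq :: "(nat \<Rightarrow> real) \<Rightarrow> (nat \<Rightarrow> real) \<Rightarrow> bool" where
  "negl_eq f g \<longleftrightarrow> negligible (\<lambda>l. f l - g l)"

end

theory Submission imports Defs "HOL-Real_Asymp.Real_Asymp" begin

lemma int01:
  fixes f :: "'b \<Rightarrow> real"
  assumes "\<And>x. 0 \<le> f x" "\<And>x. f x \<le> 1"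
  shows "integrable (measure_pmf M) f"
  by (intro measure_pmf.integrable_const_bound[where B=1]) (auto simp: assms abs_le_iff intro: order.trans[OF _ assms(2)] order.trans[OF assms(1)])

lemma E01:
  fixes f :: "'b \<Rightarrow> real"
  assumes "\<And>x. 0 \<le> f x" "\<And>x. f x \<le> 1"
  shows "0 \<le> measure_pmf.expectation M f" "measure_pmf.expectation M f \<le> 1"
  using assms by (auto intro!: integral_nonneg measure_pmf.integral_le_const int01)

lemma int_bind:
  fixes f :: "'b \<Rightarrow> real"
  assumes "\<And>x. 0 \<le> f x" "\<And>x. f x \<le> 1"
  shows "measure_pmf.expectation (bind_pmf M N) f
       = measure_pmf.expectation M (\<lambda>x. measure_pmf.expectation (N x) f)"
proof -
  have i1: "\<And>M. integrable (measure_pmf M) f" by (rule int01[OF assms])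
  have i2: "integrable (measure_pmf M) (\<lambda>x. measure_pmf.expectation (N x) f)"
    by (rule int01) (rule E01[OF assms])+
  have "ennreal (measure_pmf.expectation (bind_pmf M N) f) = (\<integral>\<^sup>+x. ennreal (f x) \<partial>bind_pmf M N)"
    by (rule nn_integral_eq_integral[symmetric]) (auto simp: i1 assms)
  also have "\<dots> = (\<integral>\<^sup>+x. \<integral>\<^sup>+y. ennreal (f y) \<partial>N x \<partial>M)" by simp
  also have "\<dots> = (\<integral>\<^sup>+x. ennreal (measure_pmf.expectation (N x) f) \<partial>M)"
    by (intro nn_integral_cong nn_integral_eq_integral) (auto simp: i1 assms)
  also have "\<dots> = ennreal (measure_pmf.expectation M (\<lambda>x. measure_pmf.expectation (N x) f))"
    by (rule nn_integral_eq_integral) (auto simp: i2 E01[OF assms])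
  finally show ?thesis
    by (subst (asm) ennreal_inj) (auto intro!: E01 assms integral_nonneg)
qed

lemma mv4: "bind_pmf A (\<lambda>s. bind_pmf B1 (\<lambda>a. bind_pmf B2 (\<lambda>b. bind_pmf B3 (\<lambda>x. bind_pmf (C a b) (\<lambda>z. f s a b x z)))))
  = bind_pmf B1 (\<lambda>a. bind_pmf B2 (\<lambda>b. bind_pmf B3 (\<lambda>x. bind_pmf (C a b) (\<lambda>z. bind_pmf A (\<lambda>s. f s a b x z)))))"
  by (simp add: bind_commute_pmf[of A])

lemma mvH: "bind_pmf A (\<lambda>H. bind_pmf B1 (\<lambda>a. bind_pmf B2 (\<lambda>b. bind_pmf B3 (\<lambda>x. f H a b x))))
  = bind_pmf B1 (\<lambda>a. bind_pmf B2 (\<lambda>b. bind_pmf B3 (\<lambda>x. bind_pmf A (\<lambda>H. f H a b x))))"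
  by (simp add: bind_commute_pmf[of A])

lemma reorder0:
  "bind_pmf Or (\<lambda>H. bind_pmf S (\<lambda>s. bind_pmf S (\<lambda>a. bind_pmf S (\<lambda>b. bind_pmf S (\<lambda>x. bind_pmf (Z H a b) (\<lambda>z. R H s a b x z))))))
 = bind_pmf S (\<lambda>a. bind_pmf S (\<lambda>b. bind_pmf S (\<lambda>x. bind_pmf Or (\<lambda>H. bind_pmf (Z H a b) (\<lambda>z. bind_pmf S (\<lambda>s. R H s a b x z))))))"
proof -
  have "\<And>H. bind_pmf S (\<lambda>s. bind_pmf S (\<lambda>a. bind_pmf S (\<lambda>b. bind_pmf S (\<lambda>x. bind_pmf (Z H a b) (\<lambda>z. R H s a b x z)))))
     = bind_pmf S (\<lambda>a. bind_pmf S (\<lambda>b. bind_pmf S (\<lambda>x. bind_pmf (Z H a b) (\<lambda>z. bind_pmf S (\<lambda>s. R H s a b x z)))))"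
    by (rule mv4)
  then have "bind_pmf Or (\<lambda>H. bind_pmf S (\<lambda>s. bind_pmf S (\<lambda>a. bind_pmf S (\<lambda>b. bind_pmf S (\<lambda>x. bind_pmf (Z H a b) (\<lambda>z. R H s a b x z))))))
     = bind_pmf Or (\<lambda>H. bind_pmf S (\<lambda>a. bind_pmf S (\<lambda>b. bind_pmf S (\<lambda>x. bind_pmf (Z H a b) (\<lambda>z. bind_pmf S (\<lambda>s. R H s a b x z))))))"
    by simp
  also have "\<dots> = bind_pmf S (\<lambda>a. bind_pmf S (\<lambda>b. bind_pmf S (\<lambda>x. bind_pmf Or (\<lambda>H. bind_pmf (Z H a b) (\<lambda>z. bind_pmf S (\<lambda>s. R H s a b x z))))))"
    by (rule mvH)
  finally show ?thesis .
qed

lemma reorder: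
  "world_pmf Z l =
     pmf_of_set (bits l) \<bind> (\<lambda>a.
     pmf_of_set (bits l) \<bind> (\<lambda>b.
     pmf_of_set (bits l) \<bind> (\<lambda>x.
     pmf_of_set (oracles l) \<bind> (\<lambda>H.
     Z l H a b \<bind> (\<lambda>z.
     pmf_of_set (bits l) \<bind> (\<lambda>s.
     return_pmf \<lparr>orc = H, sec = s, cta = a, ctb = b, chx = x, chz = z\<rparr>))))))"
  unfolding world_pmf_def by (rule reorder0)

lemma card_bits: "card (bits n) = 2 ^ n"
  unfolding bits_def using card_lists_length_eq[of "UNIV::bool set" n] by simp

lemma finite_bits[simp]: "finite (bits n)"
  unfolding bits_def using finite_lists_length_eq[of "UNIV::bool set" n] by simp

lemma bits_ne[simp]: "bits n \<noteq> {}"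
  using card_bits[of n] by (metis card.empty power_not_zero zero_neq_numeral)

lemma length_boxplus[simp]: "length (boxplus l x h) = l"
  by (simp add: boxplus_def)

lemma card_P: "card {h \<in> bits (2*l). boxplus l x h = y} \<le> 2 ^ l"
proof -
  let ?f = "\<lambda>h. map (\<lambda>i. if x!i then h!i else h!(l+i)) [0..<l]"
  have "inj_on ?f {h \<in> bits (2*l). boxplus l x h = y}"
  proof (rule inj_onI)
    fix h1 h2 assume h1: "h1 \<in> {h \<in> bits (2*l). boxplus l x h = y}" and h2: "h2 \<in> {h \<in> bits (2*l). boxplus l x h = y}"
      and e: "?f h1 = ?f h2"
    have "map (\<lambda>i. if x!i then h1!(l+i) else h1!i) [0..<l] = map (\<lambda>i. if x!i then h2!(l+i) else h2!i) [0..<l]"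
      using h1 h2 by (simp add: boxplus_def)
    then have m1: "\<forall>i\<in>set [0..<l]. (if x!i then h1!(l+i) else h1!i) = (if x!i then h2!(l+i) else h2!i)"
      by (simp only: map_eq_conv)
    have m2: "\<forall>i\<in>set [0..<l]. (if x!i then h1!i else h1!(l+i)) = (if x!i then h2!i else h2!(l+i))"
      using e by (simp only: map_eq_conv)
    have e1: "\<forall>i<l. (if x!i then h1!(l+i) else h1!i) = (if x!i then h2!(l+i) else h2!i)"
      using m1 by (metis atLeastLessThan_iff set_upt zero_le)
    have e2: "\<forall>i<l. (if x!i then h1!i else h1!(l+i)) = (if x!i then h2!i else h2!(l+i))"
      using m2 by (metis atLeastLessThan_iff set_upt zero_le)
    show "h1 = h2"
    proof (rule nth_equalityI)
      show "length h1 = length h2" using h1 h2 by (simp add: bits_def)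
      fix j assume "j < length h1"
      then have j: "j < 2*l" using h1 by (simp add: bits_def)
      show "h1 ! j = h2 ! j"
      proof (cases "j < l")
        case True
        then show ?thesis using e1 e2 by metis
      next
        case False
        then obtain i where "j = l + i" "i < l" using j by (metis add_diff_inverse_nat mult_2 nat_add_left_cancel_less)
        then show ?thesis using e1 e2 by metis
      qed
    qed
  qed
  moreover have "?f ` {h \<in> bits (2*l). boxplus l x h = y} \<subseteq> bits l" by (auto simp: bits_def)
  ultimately have "card {h \<in> bits (2*l). boxplus l x h = y} \<le> card (bits l)"
    by (intro card_inj_on_le) auto
  then show ?thesis by (simp add: card_bits)
qed

lemma card_oracles: "card (oracles l) = (2^(2*l)) ^ (2^(3*l))"
  by (simp add: oracles_def card_PiE card_bits)

lemma finite_oracles[simp]: "finite (oracles l)"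
  by (simp add: oracles_def finite_PiE)

lemma oracles_ne[simp]: "oracles l \<noteq> {}"
  using card_oracles[of l] by (metis card.empty power_not_zero zero_neq_numeral)

lemma card_Q:
  assumes T: "T \<subseteq> bits l" "card T = t" and a: "a \<in> bits l" and b: "b \<in> bits l"
  shows "card {H \<in> oracles l. \<forall>s\<in>T. boxplus l x (H (s@a@b)) = y} * (2^l)^t \<le> card (oracles l)"
proof -
  let ?A = "bits (3*l)" and ?B = "bits (2*l)" and ?U = "(\<lambda>s. s@a@b) ` T"
  let ?P = "{h \<in> bits (2*l). boxplus l x h = y}"
  have UA: "?U \<subseteq> ?A" using T a b by (auto simp: bits_def)
  have eq: "{H \<in> oracles l. \<forall>s\<in>T. boxplus l x (H (s@a@b)) = y}
      = PiE ?A (\<lambda>u. if u \<in> ?U then ?P else ?B)"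
  proof
    show "{H \<in> oracles l. \<forall>s\<in>T. boxplus l x (H (s@a@b)) = y} \<subseteq> PiE ?A (\<lambda>u. if u \<in> ?U then ?P else ?B)"
      by (auto simp: oracles_def PiE_iff extensional_def)
    show "PiE ?A (\<lambda>u. if u \<in> ?U then ?P else ?B) \<subseteq> {H \<in> oracles l. \<forall>s\<in>T. boxplus l x (H (s@a@b)) = y}"
    proof
      fix H assume H: "H \<in> PiE ?A (\<lambda>u. if u \<in> ?U then ?P else ?B)"
      then have "H \<in> oracles l" by (auto simp: oracles_def PiE_iff split: if_splits)
      moreover have "\<forall>s\<in>T. boxplus l x (H (s@a@b)) = y"
      proof
        fix s assume "s \<in> T"
        then have "s@a@b \<in> ?U" "s@a@b \<in> ?A" using UA by auto
        then show "boxplus l x (H (s@a@b)) = y" using H by (auto simp: PiE_iff)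
      qed
      ultimately show "H \<in> {H \<in> oracles l. \<forall>s\<in>T. boxplus l x (H (s@a@b)) = y}" by simp
    qed
  qed
  have cU: "card ?U = t" using T by (simp add: card_image inj_on_def)
  have cAU: "card (?A - ?U) = 2^(3*l) - t" using UA cU by (simp add: card_Diff_subset card_bits finite_subset)
  have tle: "t \<le> 2^(3*l)" using UA cU card_mono[OF finite_bits UA] by (simp add: card_bits)
  have "card (PiE ?A (\<lambda>u. if u \<in> ?U then ?P else ?B)) = (\<Prod>u\<in>?A. card (if u \<in> ?U then ?P else ?B))"
    by (simp add: card_PiE)
  also have "\<dots> = (\<Prod>u\<in>?A. if u \<in> ?U then card ?P else card ?B)"
    by (intro prod.cong) auto
  also have "\<dots> = card ?P ^ t * card ?B ^ (2^(3*l) - t)"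
  proof -
    have "(\<Prod>u\<in>?A. if u \<in> ?U then card ?P else card ?B) = (\<Prod>u\<in>?A \<inter> ?U. card ?P) * (\<Prod>u\<in>?A - ?U. card ?B)"
      by (subst prod.If_cases) (auto simp: Diff_eq)
    also have "?A \<inter> ?U = ?U" using UA by auto
    finally show ?thesis using cU cAU by simp
  qed
  finally have cQ: "card {H \<in> oracles l. \<forall>s\<in>T. boxplus l x (H (s@a@b)) = y} = card ?P ^ t * (2^(2*l)) ^ (2^(3*l) - t)"
    using eq by (simp add: card_bits)
  have "card ?P ^ t * (2^(2*l)) ^ (2^(3*l) - t) * (2^l)^t \<le> (2^l)^t * (2^(2*l)) ^ (2^(3*l) - t) * (2^l)^t"
    by (intro mult_right_mono power_mono card_P) auto
  also have "\<dots> = (2^(2*l))^t * (2^(2*l)) ^ (2^(3*l) - t)"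
    by (simp add: power_mult_distrib[symmetric] mult_2 power_add)
  also have "\<dots> = (2^(2*l)) ^ (2^(3*l))"
    using tle by (simp add: power_add[symmetric])
  finally show ?thesis using cQ card_oracles by simp
qed

lemma choose_fact: "(n choose k) * fact k \<le> (n::nat) ^ k"
proof (cases "k \<le> n")
  case True
  have h: "fact k * fact (n - k) * (n choose k) = fact n" by (rule binomial_fact_lemma[OF True])
  have "fact n = ((n choose k) * fact k) * fact (n - k)" using h by (simp only: mult_ac)
  then have "fact n div fact (n - k) = (n choose k) * fact k" by simp
  then show ?thesis using fact_div_fact_le_pow[OF True] by simp
next
  case False then show ?thesis by (simp add: not_le binomial_eq_0)
qed

lemma fact_big: "(2::nat)^l * 2^l \<le> fact (2*l+4)"
proof (induction l)
  case 0 then show ?case by simp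
next
  case (Suc l)
  have e: "2*Suc l+4 = Suc (Suc (2*l+4))" by simp
  have f: "fact (2*Suc l+4) = Suc (Suc (2*l+4)) * (Suc (2*l+4) * fact (2*l+4))"
    unfolding e by (simp only: fact_Suc of_nat_id)
  have "(2::nat)^Suc l * 2^Suc l = 2 * (2 * (2^l*2^l))" by simp
  also have "\<dots> \<le> Suc (Suc (2*l+4)) * (Suc (2*l+4) * fact (2*l+4))"
    using Suc.IH by (intro mult_le_mono) auto
  finally show ?case using f by simp
qed

lemma card_bad:
  assumes a: "a \<in> bits l" and b: "b \<in> bits l"
  shows "card {H \<in> oracles l. \<exists>y. 2*l+4 \<le> card {s\<in>bits l. boxplus l x (H (s@a@b)) = y}} * 2^l \<le> card (oracles l)"
proof -
  define t where "t = 2*l+4"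
  define n where "n = (2::nat)^l"
  define TT where "TT = {T. T \<subseteq> bits l \<and> card T = t}"
  define Q where "Q = (\<lambda>y T. {H \<in> oracles l. \<forall>s\<in>T. boxplus l x (H (s@a@b)) = y})"
  let ?bad = "{H \<in> oracles l. \<exists>y. 2*l+4 \<le> card {s\<in>bits l. boxplus l x (H (s@a@b)) = y}}"
  have fTT: "finite TT" unfolding TT_def by (rule finite_subset[of _ "Pow (bits l)"]) auto
  have cTT: "card TT = n choose t" unfolding TT_def n_def by (simp add: n_subsets card_bits)
  have sub: "?bad \<subseteq> (\<Union>y\<in>bits l. \<Union>T\<in>TT. Q y T)"
  proof
    fix H assume "H \<in> ?bad"
    then obtain y where H: "H \<in> oracles l" and c: "t \<le> card {s\<in>bits l. boxplus l x (H (s@a@b)) = y}"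
      by (auto simp: t_def)
    obtain T where T: "T \<subseteq> {s\<in>bits l. boxplus l x (H (s@a@b)) = y}" "card T = t" "finite T"
      using obtain_subset_with_card_n[OF c] by blast
    have "T \<noteq> {}" using T(2) by (auto simp: t_def)
    then obtain s where "s \<in> T" by blast
    then have "y \<in> bits l" using T(1) by (auto simp: bits_def)
    moreover have "T \<in> TT" using T unfolding TT_def by auto
    moreover have "H \<in> Q y T" using T H unfolding Q_def by auto
    ultimately show "H \<in> (\<Union>y\<in>bits l. \<Union>T\<in>TT. Q y T)" by blast
  qed
  have "card ?bad \<le> card (\<Union>y\<in>bits l. \<Union>T\<in>TT. Q y T)"
    by (rule card_mono[OF _ sub], rule finite_subset[of _ "oracles l"]) (auto simp: Q_def)
  also have "\<dots> \<le> (\<Sum>y\<in>bits l. card (\<Union>T\<in>TT. Q y T))" by (rule card_UN_le) simp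
  also have "\<dots> \<le> (\<Sum>y\<in>bits l. \<Sum>T\<in>TT. card (Q y T))"
    by (intro sum_mono card_UN_le fTT)
  finally have c0: "card ?bad \<le> (\<Sum>y\<in>bits l. \<Sum>T\<in>TT. card (Q y T))" .
  have c1: "card ?bad * n^t \<le> (\<Sum>y\<in>bits l. \<Sum>T\<in>TT. card (Q y T) * n^t)"
    using mult_le_mono1[OF c0, of "n^t"] by (simp add: sum_distrib_right)
  also have "\<dots> \<le> (\<Sum>y\<in>bits l. \<Sum>T\<in>TT. card (oracles l))"
    by (intro sum_mono) (auto simp: TT_def Q_def n_def intro!: card_Q a b)
  also have "\<dots> = n * (n choose t) * card (oracles l)"
    by (simp add: cTT card_bits n_def)
  finally have c3: "card ?bad * n^t \<le> n * (n choose t) * card (oracles l)" .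
  have "card ?bad * n^t * fact t \<le> n * (n choose t) * card (oracles l) * fact t"
    by (rule mult_le_mono1[OF c3])
  also have "\<dots> = n * ((n choose t) * fact t) * card (oracles l)" by (simp only: mult_ac)
  also have "\<dots> \<le> n * n^t * card (oracles l)"
    by (intro mult_le_mono1 mult_le_mono2 choose_fact)
  finally have c2: "card ?bad * n^t * fact t \<le> n * n^t * card (oracles l)" .
  have "card ?bad * n^t * (n * n) \<le> card ?bad * n^t * fact t"
    by (rule mult_le_mono2) (unfold t_def n_def, rule fact_big)
  from this c2 have c4: "card ?bad * n^t * (n * n) \<le> n * n^t * card (oracles l)" by (rule order.trans)
  have "card ?bad * n^t * (n * n) = (n * n^t) * (card ?bad * n)" by (simp only: mult_ac)
  with c4 have "(n * n^t) * (card ?bad * n) \<le> (n * n^t) * card (oracles l)" by simp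
  moreover have "0 < n * n^t" by (simp add: n_def)
  ultimately have "card ?bad * n \<le> card (oracles l)" by (simp only: mult_le_cancel1)
  then show ?thesis unfolding n_def .
qed

lemma sum_pmf_bound:
  assumes fin: "finite S"
  shows "(\<Sum>s\<in>S. pmf p (f s)) \<le> (if \<exists>y. t \<le> card {s\<in>S. f s = y} then real (card S) else real t)"
proof (cases "\<exists>y. t \<le> card {s\<in>S. f s = y}")
  case True
  have "(\<Sum>s\<in>S. pmf p (f s)) \<le> (\<Sum>s\<in>S. 1)" by (intro sum_mono pmf_le_1)
  then show ?thesis using True by simp
next
  case False
  have "(\<Sum>s\<in>S. pmf p (f s)) = (\<Sum>y\<in>f`S. \<Sum>s\<in>{x\<in>S. f x = y}. pmf p (f s))"
    by (rule sum.image_gen[OF fin])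
  also have "\<dots> = (\<Sum>y\<in>f`S. real (card {x\<in>S. f x = y}) * pmf p y)"
  proof (intro sum.cong refl)
    fix y assume "y \<in> f ` S"
    have "(\<Sum>s\<in>{x\<in>S. f x = y}. pmf p (f s)) = (\<Sum>s\<in>{x\<in>S. f x = y}. pmf p y)"
      by (rule sum.cong) auto
    then show "(\<Sum>s\<in>{x\<in>S. f x = y}. pmf p (f s)) = real (card {x\<in>S. f x = y}) * pmf p y" by simp
  qed
  also have "\<dots> \<le> (\<Sum>y\<in>f`S. real t * pmf p y)"
  proof (intro sum_mono mult_right_mono)
    fix y have "\<not> t \<le> card {x\<in>S. f x = y}" using False by blast
    then show "real (card {x\<in>S. f x = y}) \<le> real t" by simp
  qed simp
  also have "\<dots> = real t * (\<Sum>y\<in>f`S. pmf p y)" by (simp add: sum_distrib_left)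
  also have "(\<Sum>y\<in>f`S. pmf p y) = measure_pmf.prob p (f ` S)"
    by (simp add: measure_measure_pmf_finite fin)
  also have "real t * \<dots> \<le> real t * 1"
    by (intro mult_left_mono measure_pmf.prob_le_1) auto
  finally show ?thesis using False by simp
qed

lemma E_set_le:
  fixes f :: "'a \<Rightarrow> real"
  assumes "finite A" "A \<noteq> {}" "\<And>x. x \<in> A \<Longrightarrow> f x \<le> c"
  shows "measure_pmf.expectation (pmf_of_set A) f \<le> c"
proof -
  have "sum f A \<le> of_nat (card A) * c" using sum_bounded_above[of A f c] assms by simp
  moreover have "card A > 0" using assms by (simp add: card_gt_0_iff)
  ultimately show ?thesis using assms by (simp add: integral_pmf_of_set field_simps)
qed

definition badH :: "nat \<Rightarrow> bool list \<Rightarrow> bool list \<Rightarrow> bool list \<Rightarrow> (bool list \<Rightarrow> bool list) \<Rightarrow> bool" where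
  "badH l a b x H \<longleftrightarrow> (\<exists>y. 2*l+4 \<le> card {s\<in>bits l. boxplus l x (H (s@a@b)) = y})"

lemma avg_H:
  assumes a: "a \<in> bits l" and b: "b \<in> bits l"
  shows "measure_pmf.expectation (pmf_of_set (oracles l))
           (\<lambda>H. (if badH l a b x H then 1 else real (2*l+4) / 2^l)) \<le> real (2*l+5) / 2^l"
proof -
  let ?O = "oracles l" and ?n = "(2::real)^l" and ?t = "real (2*l+4)"
  have cb: "real (card {H \<in> ?O. badH l a b x H}) * ?n \<le> real (card ?O)"
    using card_bad[OF a b, of x] unfolding badH_def
    by (metis (mono_tags, lifting) of_nat_le_iff of_nat_mult of_nat_numeral of_nat_power)
  have "(\<Sum>H\<in>?O. (if badH l a b x H then 1 else ?t / ?n)) \<le> (\<Sum>H\<in>?O. ?t / ?n + (if badH l a b x H then 1 else 0))"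
    by (intro sum_mono) auto
  also have "\<dots> = real (card ?O) * (?t / ?n) + real (card {H \<in> ?O. badH l a b x H})"
    by (simp add: sum.distrib sum.If_cases Int_def)
  also have "\<dots> \<le> real (card ?O) * (?t / ?n) + real (card ?O) / ?n"
    using cb by (simp add: field_simps)
  also have "\<dots> = real (card ?O) * (real (2*l+5) / ?n)" by (simp add: field_simps)
  finally have "(\<Sum>H\<in>?O. (if badH l a b x H then 1 else ?t / ?n)) / real (card ?O) \<le> real (2*l+5) / ?n"
    using card_gt_0_iff[of ?O] by (simp add: field_simps)
  then show ?thesis by (simp add: integral_pmf_of_set)
qed

lemma part2_bound:
  shows "guess_prob (world_pmf Z l) (\<lambda>w. (orc w, chx w, chz w)) (\<lambda>w. boxplus l (chx w) (token w)) g
         \<le> real (2*l+5) / 2^l"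
proof -
  let ?S = "pmf_of_set (bits l)"
  let ?b = "\<lambda>H a b x. (if badH l a b x H then 1 else real (2*l+4) / 2^l)"
  define F where "F = (\<lambda>H s a b x z. pmf (g (H, x, z)) (boxplus l x (H (s@a@b))))"
  have F01: "0 \<le> F H s a b x z" "F H s a b x z \<le> 1" for H s a b x z
    by (auto simp: F_def pmf_le_1)
  have E: "guess_prob (world_pmf Z l) (\<lambda>w. (orc w, chx w, chz w)) (\<lambda>w. boxplus l (chx w) (token w)) g
    = measure_pmf.expectation ?S (\<lambda>a. measure_pmf.expectation ?S (\<lambda>b. measure_pmf.expectation ?S (\<lambda>x.
      measure_pmf.expectation (pmf_of_set (oracles l)) (\<lambda>H. measure_pmf.expectation (Z l H a b) (\<lambda>z.
      measure_pmf.expectation ?S (\<lambda>s. F H s a b x z))))))"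
    unfolding guess_prob_def reorder F_def by (simp add: int_bind pmf_le_1 token_def)
  have inner: "measure_pmf.expectation ?S (\<lambda>s. F H s a b x z) \<le> ?b H a b x" for H a b x z
  proof -
    have "measure_pmf.expectation ?S (\<lambda>s. F H s a b x z) = (\<Sum>s\<in>bits l. F H s a b x z) / 2^l"
      by (simp add: integral_pmf_of_set card_bits)
    also have "\<dots> \<le> (if badH l a b x H then real (card (bits l)) else real (2*l+4)) / 2^l"
      unfolding F_def badH_def
      by (intro divide_right_mono sum_pmf_bound) auto
    also have "\<dots> = ?b H a b x" by (simp add: card_bits)
    finally show ?thesis .
  qed
  have lvlZ: "measure_pmf.expectation (Z l H a b) (\<lambda>z. measure_pmf.expectation ?S (\<lambda>s. F H s a b x z)) \<le> ?b H a b x"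
    for H a b x
    by (intro measure_pmf.integral_le_const int01 AE_I2 inner E01 F01)
  have lvlH: "measure_pmf.expectation (pmf_of_set (oracles l)) (\<lambda>H. measure_pmf.expectation (Z l H a b) (\<lambda>z.
      measure_pmf.expectation ?S (\<lambda>s. F H s a b x z))) \<le> real (2*l+5) / 2^l"
    if a: "a \<in> bits l" and b: "b \<in> bits l" for a b x
  proof -
    have "measure_pmf.expectation (pmf_of_set (oracles l)) (\<lambda>H. measure_pmf.expectation (Z l H a b) (\<lambda>z.
      measure_pmf.expectation ?S (\<lambda>s. F H s a b x z))) \<le> measure_pmf.expectation (pmf_of_set (oracles l)) (\<lambda>H. ?b H a b x)"
      unfolding integral_pmf_of_set[OF oracles_ne finite_oracles]
      by (intro divide_right_mono sum_mono lvlZ) auto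
    also have "\<dots> \<le> real (2*l+5) / 2^l" by (rule avg_H[OF a b])
    finally show ?thesis .
  qed
  show ?thesis unfolding E
    by (intro E_set_le lvlH finite_bits bits_ne)
qed

lemma gp01: "0 \<le> guess_prob D V T g" "guess_prob D V T g \<le> 1"
  unfolding guess_prob_def by (rule E01, simp, simp add: pmf_le_1)+

lemma bddP: "bdd_above (range (guess_prob D V T))"
  by (rule bdd_aboveI[of _ 1]) (auto intro: gp01)

lemma gc_ge0: "0 \<le> guess_chance D V T"
  unfolding guess_chance_def by (rule cSUP_upper2[OF bddP UNIV_I]) (rule gp01)

lemma gc_le: "(\<And>g. guess_prob D V T g \<le> c) \<Longrightarrow> guess_chance D V T \<le> c"
  unfolding guess_chance_def by (rule cSUP_least) auto

lemma gc_eq1: assumes "guess_prob D V T g0 = 1" shows "guess_chance D V T = 1"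
proof (rule antisym)
  show "guess_chance D V T \<le> 1" by (rule gc_le) (rule gp01)
  show "1 \<le> guess_chance D V T"
  proof -
    have "guess_prob D V T g0 \<le> (SUP g. guess_prob D V T g)" by (rule cSUP_upper[OF UNIV_I bddP])
    then show ?thesis using assms by (simp add: guess_chance_def)
  qed
qed

lemma gc_view: assumes "\<And>w. V1 w = \<phi> (V2 w)" shows "guess_chance D V1 T \<le> guess_chance D V2 T"
proof (rule gc_le)
  fix g
  have "guess_prob D V1 T g = guess_prob D V2 T (g \<circ> \<phi>)" by (simp add: guess_prob_def assms)
  also have "\<dots> \<le> guess_chance D V2 T" unfolding guess_chance_def by (rule cSUP_upper[OF UNIV_I bddP])
  finally show "guess_prob D V1 T g \<le> guess_chance D V2 T" .
qed

lemma negl_small: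
  assumes "\<And>l. \<bar>f l\<bar> \<le> (2 * real l + 6) / 2^l"
  shows "negligible f"
  unfolding negligible_def
proof
  fix c :: nat
  have lim: "((\<lambda>l::nat. real l ^ c * (2 * real l + 6) / 2 ^ l) \<longlongrightarrow> 0) sequentially"
    by real_asymp
  have ev: "\<forall>\<^sub>F l in sequentially. real l ^ c * (2 * real l + 6) / 2 ^ l < 1"
    using order_tendstoD(2)[OF lim, of 1] by simp
  show "\<forall>\<^sub>F l in sequentially. \<bar>f l\<bar> \<le> inverse (real l ^ c)"
    using ev eventually_ge_at_top[of 1]
  proof eventually_elim
    case (elim l)
    have pos: "0 < real l ^ c" using elim(2) by simp
    have "(2 * real l + 6) / 2^l \<le> inverse (real l ^ c)"
      using elim(1) pos by (simp add: field_simps)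
    then show ?case using assms[of l] by linarith
  qed
qed

lemma boxplus_wild:
  assumes "length x = l"
  shows "boxplus l (map (\<lambda>ob. case ob of None \<Rightarrow> False | Some b \<Rightarrow> b) (wild x (kernel l h))) h = boxplus l x h"
  using assms by (auto simp: boxplus_def wild_def kernel_def)

lemma world_chx: "w \<in> set_pmf (world_pmf Z l) \<Longrightarrow> length (chx w) = l"
  unfolding world_pmf_def
  apply (auto simp: set_pmf_of_set[OF bits_ne finite_bits])
  apply (auto simp: bits_def)
  done

theorem lemma6p3:
  fixes Z :: "nat \<Rightarrow> (bool list \<Rightarrow> bool list) \<Rightarrow> bool list \<Rightarrow> bool list \<Rightarrow> bool list pmf"
    and incl_z incl_zh :: bool
  assumes "\<And>l H a b. set_pmf (Z l H a b) \<subseteq> bits l"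
  shows
    "negl_eq (\<lambda>l. guess_chance (world_pmf Z l) (\<lambda>w. orc w)
                 (\<lambda>w. boxplus l (chx w) (token w)))
             (\<lambda>l. (1/2) ^ l) \<and>
     negl_eq (\<lambda>l. guess_chance (world_pmf Z l) (\<lambda>w. (orc w, chx w, chz w))
                 (\<lambda>w. boxplus l (chx w) (token w)))
             (\<lambda>l. (1/2) ^ l) \<and>
     negl_eq (\<lambda>l. guess_chance (world_pmf Z l)
                 (\<lambda>w. (orc w, cta w, ctb w, sec w, wild (chx w) (kernel l (token w))))
                 (\<lambda>w. boxplus l (chx w) (token w)))
             (\<lambda>l. 1) \<and>
     negl_eq (\<lambda>l. guess_chance (world_pmf Z l)
                 (\<lambda>w. (orc w, cta w, ctb w, sec w, chx w,
                       if incl_z then Some (chz w) else None,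
                       if incl_zh then Some (boxplus l (chz w) (token w)) else None))
                 (\<lambda>w. boxplus l (chx w) (token w)))
             (\<lambda>l. 1)"
proof -
  let ?P1 = "\<lambda>l. guess_chance (world_pmf Z l) (\<lambda>w. orc w) (\<lambda>w. boxplus l (chx w) (token w))"
  let ?P2 = "\<lambda>l. guess_chance (world_pmf Z l) (\<lambda>w. (orc w, chx w, chz w)) (\<lambda>w. boxplus l (chx w) (token w))"
  have P2le: "?P2 l \<le> real (2*l+5) / 2^l" for l
    by (rule gc_le) (rule part2_bound)
  have P12: "?P1 l \<le> ?P2 l" for l
    by (rule gc_view[of _ fst]) simp
  have h2: "\<bar>?P2 l - (1/2)^l\<bar> \<le> (2 * real l + 6) / 2^l" for l
  proof -
    have "0 \<le> ?P2 l" by (rule gc_ge0)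
    moreover have "(1/2::real)^l = 1 / 2^l" by (simp add: power_one_over)
    ultimately show ?thesis using P2le[of l] by (simp add: abs_le_iff field_simps)
  qed
  have h1: "\<bar>?P1 l - (1/2)^l\<bar> \<le> (2 * real l + 6) / 2^l" for l
  proof -
    have "0 \<le> ?P1 l" by (rule gc_ge0)
    moreover have "(1/2::real)^l = 1 / 2^l" by (simp add: power_one_over)
    moreover have "?P1 l \<le> real (2*l+5) / 2^l" using P12[of l] P2le[of l] by (rule order.trans)
    ultimately show ?thesis by (simp add: abs_le_iff field_simps)
  qed
  have z: "negligible (\<lambda>l. 0)" by (rule negl_small) simp
  have c3: "guess_chance (world_pmf Z l)
                 (\<lambda>w. (orc w, cta w, ctb w, sec w, wild (chx w) (kernel l (token w))))
                 (\<lambda>w. boxplus l (chx w) (token w)) = 1" for l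
  proof (rule gc_eq1)
    show "guess_prob (world_pmf Z l) (\<lambda>w. (orc w, cta w, ctb w, sec w, wild (chx w) (kernel l (token w))))
                 (\<lambda>w. boxplus l (chx w) (token w))
          (\<lambda>(H, a, b, s, wx). return_pmf (boxplus l (map (\<lambda>ob. case ob of None \<Rightarrow> False | Some b \<Rightarrow> b) wx) (H (s@a@b)))) = 1"
      unfolding guess_prob_def
    proof -
      have "measure_pmf.expectation (world_pmf Z l) (\<lambda>w. pmf ((\<lambda>(H, a, b, s, wx). return_pmf (boxplus l (map (\<lambda>ob. case ob of None \<Rightarrow> False | Some b \<Rightarrow> b) wx) (H (s@a@b))))
           (orc w, cta w, ctb w, sec w, wild (chx w) (kernel l (token w)))) (boxplus l (chx w) (token w)))
        = measure_pmf.expectation (world_pmf Z l) (\<lambda>w. 1)"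
        by (intro integral_cong_AE AE_pmfI) (auto simp: boxplus_wild world_chx token_def)
      then show "measure_pmf.expectation (world_pmf Z l) (\<lambda>w. pmf ((\<lambda>(H, a, b, s, wx). return_pmf (boxplus l (map (\<lambda>ob. case ob of None \<Rightarrow> False | Some b \<Rightarrow> b) wx) (H (s@a@b))))
           (orc w, cta w, ctb w, sec w, wild (chx w) (kernel l (token w)))) (boxplus l (chx w) (token w))) = 1"
        by simp
    qed
  qed
  have c4: "guess_chance (world_pmf Z l)
                 (\<lambda>w. (orc w, cta w, ctb w, sec w, chx w,
                       if incl_z then Some (chz w) else None,
                       if incl_zh then Some (boxplus l (chz w) (token w)) else None))
                 (\<lambda>w. boxplus l (chx w) (token w)) = 1" for l
    by (rule gc_eq1[of _ _ _ "\<lambda>(H, a, b, s, x, _, _). return_pmf (boxplus l x (H (s@a@b)))"])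
       (simp add: guess_prob_def token_def)
  show ?thesis
    unfolding negl_eq_def
    using negl_small[OF h1] negl_small[OF h2] z c3 c4 by simp
qed

end
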